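(* Fix constants $B>0$, $1\le\Gamma\le 3$, $0<\kappa\le 1$, and Riemann data $\varrho_l>0$, $\varrho_r>0$, $\upsilon_l,\upsilon_r\ge0$ with $\upsilon_r\le\upsilon_l-\frac{B}{\varrho_l^{\kappa}}$. For $a>0$, $A>0$ (with $a<1/\max(\varrho_l,\varrho_r)$) let $p(\varrho)=A\left(\frac{\varrho}{1-a\varrho}\right)^{\Gamma}-\frac{B}{\varrho^{\kappa}}$ and let $(\varrho_a,\upsilon_a)$ be the shock-plus-contact-discontinuity Riemann solution of $$\varrho_t+(\varrho\upsilon)_x=0,\qquad (\varrho(\upsilon+p))_t+(\varrho\upsilon(\upsilon+p))_x=0,$$ with $(\varrho,\upsilon)(x,0)=(\varrho_l,\upsilon_l)$ for $x<0$ and $(\varrho_r,\upsilon_r)$ for $x>0$, namely, with $\zeta=x/t$, $$(\varrho_a,\upsilon_a)(\zeta)=\begin{cases}(\varrho_l,\upsilon_l),&\zeta<\sigma_1,\\ (\varrho_*,\upsilon_r),&\sigma_1<\zeta<\sigma_2,\\ (\varrho_r,\upsilon_r),&\zeta>\sigma_2,\end{cases}$$ where $\varrho_*\in(\varrho_l,1/a)$ solves $\upsilon_r=-p(\varrho_* )+\upsilon_l+p(\varrho_l)$, $\sigma_1=\upsilon_l-\frac{\varrho_*(p(\varrho_* )-p(\varrho_l))}{\varrho_*-\varrho_l}$ and $\sigma_2=\upsilon_r$. Then $$\lim_{a,A\to0}\upsilon_a(x,t)=\begin{cases}\upsilon_l,&x<\upsilon_r t,\\ \upsilon_r,&x=\upsilon_r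 t,\\ \upsilon_r,&x>\upsilon_r t,\end{cases}$$ and $\varrho_a$ converges in the sense of distributions to the sum of a step function and a Dirac delta measure supported on the line $x=\upsilon_r t$ with weight $w(t)=\varrho_l(\upsilon_l-\upsilon_r)t$: for every $\psi\in C_0^\infty(\mathbb{R}\times\mathbb{R}^+)$, $$\lim_{a,A\to0}\int_0^{\infty}\!\!\int_{-\infty}^{\infty}\varrho_a(x/t)\psi(x,t)\,dx\,dt=\int_0^\infty \varrho_l(\upsilon_l-\upsilon_r)t\,\psi(\upsilon_r t,t)\,dt+\int_0^\infty\!\!\int_{-\infty}^{\infty}H(x-\upsilon_r t)\psi(x,t)\,dx\,dt,$$ where $H(y)=\varrho_l$ for $y<0$ and $H(y)=\varrho_r$ for $y>0$.
   Context: The limit $a,A\to0$ is taken with $B,\Gamma,\kappa$ and the Riemann data fixed. In this situation the shock connects $(\varrho_l,\upsilon_l)$ to the intermediate state $(\varrho_*,\upsilon_r)$ (with $\varrho_*>\varrho_l$) and the contact discontinuity connects $(\varrho_*,\upsilon_r)$ to $(\varrho_r,\upsilon_r)$. *)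

theory Defs
  imports "HOL-Analysis.Analysis"
begin

definition pres :: "real \<Rightarrow> real \<Rightarrow> real \<Rightarrow> real \<Rightarrow> real \<Rightarrow> real \<Rightarrow> real" where
  "pres a A B \<Gamma> \<kappa> \<rho> = A * (\<rho> / (1 - a * \<rho>)) powr \<Gamma> - B / \<rho> powr \<kappa>"

definition rho_star :: "real \<Rightarrow> real \<Rightarrow> real \<Rightarrow> real \<Rightarrow> real \<Rightarrow> real \<Rightarrow> real \<Rightarrow> real \<Rightarrow> real" where
  "rho_star a A B \<Gamma> \<kappa> \<rho>l \<upsilon>l \<upsilon>r =
     (THE r. \<rho>l < r \<and> r < 1 / a \<and>
        \<upsilon>r = - pres a A B \<Gamma> \<kappa> r + \<upsilon>l + pres a A B \<Gamma> \<kappa> \<rho>l)"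

definition sigma1 :: "real \<Rightarrow> real \<Rightarrow> real \<Rightarrow> real \<Rightarrow> real \<Rightarrow> real \<Rightarrow> real \<Rightarrow> real \<Rightarrow> real" where
  "sigma1 a A B \<Gamma> \<kappa> \<rho>l \<upsilon>l \<upsilon>r =
     (let r = rho_star a A B \<Gamma> \<kappa> \<rho>l \<upsilon>l \<upsilon>r in
      \<upsilon>l - r * (pres a A B \<Gamma> \<kappa> r - pres a A B \<Gamma> \<kappa> \<rho>l) / (r - \<rho>l))"

text \<open>Values on the
  discontinuity lines (zeta = sigma_1, sigma_2) are fixed by a convention; the
  velocity equals v_r on both sides of sigma_2, so it is v_r there.\<close>
definition rho_sol :: "real \<Rightarrow> real \<Rightarrow> real \<Rightarrow> real \<Rightarrow> real \<Rightarrow> real \<Rightarrow> real \<Rightarrow> real \<Rightarrow> real \<Rightarrow> real \<Rightarrow> real" where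
  "rho_sol a A B \<Gamma> \<kappa> \<rho>l \<upsilon>l \<rho>r \<upsilon>r \<zeta> =
     (if \<zeta> < sigma1 a A B \<Gamma> \<kappa> \<rho>l \<upsilon>l \<upsilon>r then \<rho>l
      else if \<zeta> < \<upsilon>r then rho_star a A B \<Gamma> \<kappa> \<rho>l \<upsilon>l \<upsilon>r
      else \<rho>r)"

definition v_sol :: "real \<Rightarrow> real \<Rightarrow> real \<Rightarrow> real \<Rightarrow> real \<Rightarrow> real \<Rightarrow> real \<Rightarrow> real \<Rightarrow> real \<Rightarrow> real" where
  "v_sol a A B \<Gamma> \<kappa> \<rho>l \<upsilon>l \<upsilon>r \<zeta> =
     (if \<zeta> < sigma1 a A B \<Gamma> \<kappa> \<rho>l \<upsilon>l \<upsilon>r then \<upsilon>l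
      else if \<zeta> < \<upsilon>r then \<upsilon>r
      else \<upsilon>r)"

primrec Ck2 :: "nat \<Rightarrow> (real \<times> real \<Rightarrow> real) \<Rightarrow> bool" where
  "Ck2 0 f = continuous_on UNIV f"
| "Ck2 (Suc k) f = (\<exists>fx ft. (\<forall>z. (f has_derivative (\<lambda>h. fst h * fx z + snd h * ft z)) (at z))
                          \<and> Ck2 k fx \<and> Ck2 k ft)"

definition smooth2 :: "(real \<times> real \<Rightarrow> real) \<Rightarrow> bool" where
  "smooth2 f = (\<forall>k. Ck2 k f)"

definition test_fun :: "(real \<times> real \<Rightarrow> real) \<Rightarrow> bool" where
  "test_fun \<psi> = (smooth2 \<psi> \<and> compact (closure {z. \<psi> z \<noteq> 0})
                   \<and> closure {z. \<psi> z \<noteq> 0} \<subseteq> UNIV \<times> {0<..})"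

end

theory Submission
  imports Defs
begin


lemma pres_mono:
  assumes "0 < a" "0 < A" "B > 0" "\<Gamma> > 0" "\<kappa> > 0" "0 < r1" "r1 < r2" "a * r2 < 1"
  shows "pres a A B \<Gamma> \<kappa> r1 < pres a A B \<Gamma> \<kappa> r2"
proof -
  have ar1: "a * r1 < 1" using assms by (smt (verit) mult_strict_left_mono)
  have q: "r1 / (1 - a * r1) < r2 / (1 - a * r2)"
    using assms ar1 by (simp add: field_simps)
  have "(r1 / (1 - a * r1)) powr \<Gamma> < (r2 / (1 - a * r2)) powr \<Gamma>"
    by (rule powr_less_mono2) (use assms ar1 q in auto)
  hence 1: "A * (r1 / (1 - a * r1)) powr \<Gamma> < A * (r2 / (1 - a * r2)) powr \<Gamma>"
    using assms by simp
  have "r1 powr \<kappa> < r2 powr \<kappa>" by (rule powr_less_mono2) (use assms in auto)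
  hence 2: "B / r2 powr \<kappa> < B / r1 powr \<kappa>"
    using assms by (simp add: divide_strict_left_mono)
  show ?thesis unfolding pres_def using 1 2 by linarith
qed

lemma pres_cont:
  assumes "0 < a" "0 < lo" "a * hi < 1"
  shows "continuous_on {lo..hi} (pres a A B \<Gamma> \<kappa>)"
proof -
  have "\<forall>r\<in>{lo..hi}. a * r < 1" using assms by (smt (verit) atLeastAtMost_iff mult_left_mono)
  then show ?thesis unfolding pres_def using assms
    by (intro continuous_intros) (auto simp: field_simps)
qed


lemma rho_star_props:
  assumes "0 < a" "0 < A" "B > 0" "1 \<le> \<Gamma>" "\<kappa> > 0" "\<rho>l > 0" "a * \<rho>l < 1"
    and "\<upsilon>r \<le> \<upsilon>l - B / \<rho>l powr \<kappa>"
  defines "rs \<equiv> rho_star a A B \<Gamma> \<kappa> \<rho>l \<upsilon>l \<upsilon>r"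
  shows "\<rho>l < rs \<and> a * rs < 1 \<and> pres a A B \<Gamma> \<kappa> rs = pres a A B \<Gamma> \<kappa> \<rho>l + (\<upsilon>l - \<upsilon>r)"
proof -
  let ?p = "pres a A B \<Gamma> \<kappa>"
  define D where "D = \<upsilon>l - \<upsilon>r"
  have BD: "B / \<rho>l powr \<kappa> \<le> D" using assms(8) unfolding D_def by simp
  have Dpos: "D > 0" using BD assms by (smt (verit) divide_pos_pos powr_gt_zero)
  define fl where "fl = \<rho>l / (1 - a * \<rho>l)"
  have flpos: "fl > 0" using assms unfolding fl_def by simp
  define y where "y = max 1 fl + fl powr \<Gamma> + D / A"
  have "fl powr \<Gamma> \<ge> 0" "D / A > 0" using Dpos assms(2) by auto
  hence y1: "y \<ge> 1" "y \<ge> fl" unfolding y_def by linarith+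
  have ypos: "y > 0" using y1 by simp
  define r1 where "r1 = y / (1 + a * y)"
  have ay: "1 + a * y > 0" using assms ypos by (simp add: add_pos_pos)
  have r1ge: "\<rho>l \<le> r1"
  proof -
    have "\<rho>l * (1 + a * y) \<le> y"
      using y1(2) assms unfolding fl_def by (simp add: field_simps)
    thus ?thesis unfolding r1_def using ay by (simp add: field_simps)
  qed
  have ar1: "a * r1 < 1" unfolding r1_def using ay assms by (simp add: field_simps)
  have r1y: "r1 / (1 - a * r1) = y" unfolding r1_def using ay assms ypos
    by (simp add: field_simps)
  have "y \<le> y powr \<Gamma>" using powr_mono[of 1 \<Gamma> y] y1 assms by simp
  hence "A * y \<le> A * y powr \<Gamma>" using assms by simp
  moreover have "A * y \<ge> A * fl powr \<Gamma> + D"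
    using y1 assms(2) unfolding y_def by (simp add: field_simps)
  moreover have "B / r1 powr \<kappa> \<le> B / \<rho>l powr \<kappa>"
    using r1ge assms by (intro divide_left_mono powr_mono2 mult_pos_pos) auto
  ultimately have pr1: "?p r1 \<ge> ?p \<rho>l + D"
    unfolding pres_def r1y fl_def by linarith
  have plt: "?p \<rho>l < ?p \<rho>l + D" using Dpos by simp
  obtain x where x: "\<rho>l \<le> x" "x \<le> r1" "?p x = ?p \<rho>l + D"
    using IVT'[of ?p \<rho>l "?p \<rho>l + D" r1] pres_cont[of a \<rho>l r1 A B \<Gamma> \<kappa>] pr1 r1ge ar1 assms Dpos
    by auto
  have xne: "x \<noteq> \<rho>l" using x plt by auto
  have ax: "a * x < 1" using x ar1 assms by (smt (verit) mult_left_mono)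
  have ex: "\<exists>!r. \<rho>l < r \<and> r < 1 / a \<and> \<upsilon>r = - ?p r + \<upsilon>l + ?p \<rho>l"
  proof
    show "\<rho>l < x \<and> x < 1 / a \<and> \<upsilon>r = - ?p x + \<upsilon>l + ?p \<rho>l"
      using x xne ax assms unfolding D_def by (auto simp: field_simps)
  next
    fix r assume r: "\<rho>l < r \<and> r < 1 / a \<and> \<upsilon>r = - ?p r + \<upsilon>l + ?p \<rho>l"
    have ar: "a * r < 1" using r assms by (simp add: field_simps)
    show "r = x"
    proof (rule ccontr)
      assume "r \<noteq> x"
      hence "r < x \<or> x < r" by auto
      thus False
        using pres_mono[of a A B \<Gamma> \<kappa> r x] pres_mono[of a A B \<Gamma> \<kappa> x r] r x ar ax assms xne
        unfolding D_def by auto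
    qed
  qed
  have "\<rho>l < rs \<and> rs < 1 / a \<and> \<upsilon>r = - ?p rs + \<upsilon>l + ?p \<rho>l"
    unfolding rs_def rho_star_def by (rule theI'[OF ex])
  thus ?thesis using assms by (auto simp: field_simps)
qed


lemma ev_small:
  fixes S :: "(real \<times> real) set"
  assumes "e > 0"
  shows "eventually (\<lambda>z. z \<in> S \<and> fst z < e \<and> snd z < e) (at (0,0) within S)"
proof -
  have t: "((\<lambda>z. z) \<longlongrightarrow> (0::real,0::real)) (at (0,0) within S)" by (rule tendsto_ident_at)
  have 1: "eventually (\<lambda>z. fst z < e) (at (0,0) within S)"
    using order_tendstoD(2)[OF tendsto_fst[OF t]] assms by simp
  have 2: "eventually (\<lambda>z. snd z < e) (at (0,0) within S)"
    using order_tendstoD(2)[OF tendsto_snd[OF t]] assms by simp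
  have 3: "eventually (\<lambda>z. z \<in> S) (at (0,0) within S)"
    unfolding eventually_at_filter by (rule always_eventually) auto
  show ?thesis using 1 2 3 by eventually_elim auto
qed

lemma ev_big:
  assumes "B > 0" "1 \<le> \<Gamma>" "\<kappa> > 0" "\<rho>l > 0" "\<upsilon>r \<le> \<upsilon>l - B / \<rho>l powr \<kappa>"
  shows "eventually (\<lambda>z. z \<in> {(a, A). 0 < a \<and> 0 < A \<and> a * max \<rho>l \<rho>r < 1}
     \<and> M < rho_star (fst z) (snd z) B \<Gamma> \<kappa> \<rho>l \<upsilon>l \<upsilon>r)
     (at (0,0) within {(a, A). 0 < a \<and> 0 < A \<and> a * max \<rho>l \<rho>r < 1})"
proof -
  define M' where "M' = max M \<rho>l"
  have M'pos: "M' > 0" "M' \<ge> M" "M' \<ge> \<rho>l" using assms unfolding M'_def by auto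
  define e where "e = min (1 / (2 * M')) ((B / M' powr \<kappa>) / ((2 * M') powr \<Gamma>))"
  have epos: "e > 0" unfolding e_def using M'pos assms by auto
  show ?thesis
    using ev_small[OF epos]
  proof (rule eventually_mono)
    fix z assume z: "z \<in> {(a, A). 0 < a \<and> 0 < A \<and> a * max \<rho>l \<rho>r < 1} \<and> fst z < e \<and> snd z < e"
    obtain a A where zz: "z = (a, A)" by force
    have a: "0 < a" "0 < A" "a * \<rho>l < 1" "a < e" "A < e" using z zz
      by (auto simp: max_def split: if_splits) (smt (verit) mult_left_mono)
    let ?p = "pres a A B \<Gamma> \<kappa>"
    define rs where "rs = rho_star a A B \<Gamma> \<kappa> \<rho>l \<upsilon>l \<upsilon>r"
    have rs: "\<rho>l < rs" "a * rs < 1" "?p rs = ?p \<rho>l + (\<upsilon>l - \<upsilon>r)"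
      using rho_star_props[of a A B \<Gamma> \<kappa> \<rho>l \<upsilon>r \<upsilon>l] a assms unfolding rs_def by auto
    have "a * M' < 1/2" using a(4) M'pos unfolding e_def by (simp add: field_simps)
    hence q: "M' / (1 - a * M') \<le> 2 * M'" using M'pos by (simp add: field_simps)
    have q0: "M' / (1 - a * M') \<ge> 0" using \<open>a * M' < 1/2\<close> M'pos by simp
    have "(M' / (1 - a * M')) powr \<Gamma> \<le> (2 * M') powr \<Gamma>"
      by (rule powr_mono2) (use q q0 assms in auto)
    hence "A * (M' / (1 - a * M')) powr \<Gamma> \<le> A * (2 * M') powr \<Gamma>" using a by simp
    also have "\<dots> < B / M' powr \<kappa>"
      using a(5) M'pos unfolding e_def by (simp add: field_simps)
    finally have pM: "?p M' < 0" unfolding pres_def by simp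
    have "A * (\<rho>l / (1 - a * \<rho>l)) powr \<Gamma> \<ge> 0" using a by simp
    hence "?p rs \<ge> 0" using rs(3) assms unfolding pres_def by linarith
    have "M' < rs"
    proof (rule ccontr)
      assume "\<not> M' < rs"
      hence "rs < M' \<or> rs = M'" by auto
      thus False
      proof
        assume "rs < M'"
        hence "?p rs < ?p M'" using pres_mono[of a A B \<Gamma> \<kappa> rs M'] a assms rs
          \<open>a * M' < 1/2\<close> by auto
        thus False using pM \<open>?p rs \<ge> 0\<close> by linarith
      qed (use pM \<open>?p rs \<ge> 0\<close> in auto)
    qed
    thus "z \<in> {(a, A). 0 < a \<and> 0 < A \<and> a * max \<rho>l \<rho>r < 1}
     \<and> M < rho_star (fst z) (snd z) B \<Gamma> \<kappa> \<rho>l \<upsilon>l \<upsilon>r"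
      using z zz M'pos unfolding rs_def by auto
  qed
qed


lemma outer_int:
  fixes \<Phi> :: "real \<Rightarrow> real"
  assumes meas: "\<Phi> \<in> borel_measurable lborel" and "K \<ge> 0" "R \<ge> 0"
    and bnd: "\<And>t. t > 0 \<Longrightarrow> \<bar>\<Phi> t\<bar> \<le> K" and zero: "\<And>t. t > R \<Longrightarrow> \<Phi> t = 0"
  shows "set_integrable lborel {0<..} \<Phi> \<and> \<bar>LINT t:{0<..}|lborel. \<Phi> t\<bar> \<le> K * R"
proof -
  have b: "\<bar>indicator {0<..} t * \<Phi> t\<bar> \<le> K * indicator {0<..R} t" for t :: real
    using bnd[of t] zero[of t] assms by (cases "t > 0"; cases "t \<le> R") (auto simp: indicator_def)
  have ib: "integrable lborel (\<lambda>t. K * indicator {0<..R} t)"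
    using assms by (intro integrable_mult_right integrable_real_indicator) (auto simp: emeasure_lborel_Icc_eq)
  have si: "integrable lborel (\<lambda>t. indicator {0<..} t * \<Phi> t)"
    by (rule Bochner_Integration.integrable_bound[OF ib]) (use meas b in \<open>auto intro!: always_eventually order_trans[OF _ abs_ge_self]\<close>)
  have "\<bar>LINT t:{0<..}|lborel. \<Phi> t\<bar> = norm (LINT t|lborel. indicator {0<..} t * \<Phi> t)"
    unfolding set_lebesgue_integral_def by simp
  also have "\<dots> \<le> (LINT t|lborel. norm (indicator {0<..} t * \<Phi> t))"
    by (rule integral_norm_bound)
  also have "\<dots> \<le> (LINT t|lborel. K * indicator {0<..R} t)"
    by (rule integral_mono) (use si ib b in auto)
  also have "\<dots> = K * R" using assms by simp
  finally show ?thesis using si unfolding set_integrable_def by simp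
qed

lemma inner_int:
  fixes \<psi> :: "real \<times> real \<Rightarrow> real" and g :: "real \<Rightarrow> real"
  assumes cont: "continuous_on UNIV \<psi>" and Mb: "\<And>z. \<bar>\<psi> z\<bar> \<le> M"
    and supp: "\<And>x t. \<psi> (x, t) \<noteq> 0 \<Longrightarrow> \<bar>x\<bar> \<le> R \<and> \<bar>t\<bar> \<le> R"
    and gm: "g \<in> borel_measurable lborel" and gb: "\<And>x. \<bar>g x\<bar> \<le> C" and R0: "R \<ge> 0"
  shows "integrable lborel (\<lambda>x. g x * \<psi> (x, t)) \<and> \<bar>LINT x|lborel. g x * \<psi> (x, t)\<bar> \<le> C * M * (2 * R)"
proof -
  have [measurable]: "\<psi> \<in> borel_measurable borel" using cont by (rule borel_measurable_continuous_onI)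
  have [measurable]: "g \<in> borel_measurable borel" using gm by simp
  have C0: "C \<ge> 0" using gb[of 0] by simp
  have M0: "M \<ge> 0" using Mb[of 0] by simp
  have b: "\<bar>g x * \<psi> (x, t)\<bar> \<le> C * M * indicator {-R..R} x" for x
  proof (cases "\<psi> (x, t) = 0")
    case False
    hence "\<bar>x\<bar> \<le> R" using supp by blast
    hence "indicator {-R..R} x = (1::real)" by (auto simp: indicator_def)
    thus ?thesis using gb[of x] Mb[of "(x,t)"] C0 M0 by (simp add: abs_mult mult_mono)
  qed (use C0 M0 in \<open>auto simp: indicator_def\<close>)
  have ib: "integrable lborel (\<lambda>x. C * M * indicator {-R..R} x)"
    by (intro integrable_mult_right integrable_real_indicator) (auto simp: emeasure_lborel_Icc_eq)
  have si: "integrable lborel (\<lambda>x. g x * \<psi> (x, t))"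
    by (rule Bochner_Integration.integrable_bound[OF ib]) (use b in \<open>auto intro!: always_eventually order_trans[OF _ abs_ge_self]\<close>)
  have "\<bar>LINT x|lborel. g x * \<psi> (x, t)\<bar> \<le> (LINT x|lborel. norm (g x * \<psi> (x, t)))"
    using integral_norm_bound[of lborel "\<lambda>x. g x * \<psi> (x, t)"] by simp
  also have "\<dots> \<le> (LINT x|lborel. C * M * indicator {-R..R} x)"
    by (rule integral_mono) (use si ib b in auto)
  also have "\<dots> \<le> C * M * (2 * R)" using C0 M0 R0 by auto
  finally show ?thesis using si by simp
qed


lemma core_est:
  fixes \<psi> :: "real \<times> real \<Rightarrow> real"
  assumes cont: "continuous_on UNIV \<psi>" and Mb: "\<And>z. \<bar>\<psi> z\<bar> \<le> M"
    and supp: "\<And>x t. \<psi> (x, t) \<noteq> 0 \<Longrightarrow> \<bar>x\<bar> \<le> R \<and> \<bar>t\<bar> \<le> R" and R0: "R > 0"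
    and srs: "s < \<upsilon>r" "(rs - \<rho>l) * (\<upsilon>r - s) = W" "W \<ge> 0" "rs \<ge> \<rho>l" and eps: "\<epsilon> \<ge> 0"
    and UC: "\<And>x t. 0 < t \<Longrightarrow> t \<le> R \<Longrightarrow> \<bar>x - \<upsilon>r * t\<bar> \<le> (\<upsilon>r - s) * R
               \<Longrightarrow> \<bar>\<psi> (x, t) - \<psi> (\<upsilon>r * t, t)\<bar> \<le> \<epsilon>"
  shows "\<bar>(LINT t:{0<..}|lborel. LINT x|lborel.
            (if x / t < s then \<rho>l else if x / t < \<upsilon>r then rs else \<rho>r) * \<psi> (x, t))
         - ((LINT t:{0<..}|lborel. W * t * \<psi> (\<upsilon>r * t, t))
              + (LINT t:{0<..}|lborel. LINT x|lborel.
                   (if x - \<upsilon>r * t < 0 then \<rho>l else \<rho>r) * \<psi> (x, t)))\<bar> \<le> W * \<epsilon> * R * R"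
proof -
  have [measurable]: "\<psi> \<in> borel_measurable borel" using cont by (rule borel_measurable_continuous_onI)
  have M0: "M \<ge> 0" using Mb[of 0] by simp
  define rf where "rf = (\<lambda>t x. (if x / t < s then \<rho>l else if x / t < \<upsilon>r then rs else \<rho>r))"
  define H where "H = (\<lambda>t x. (if x - \<upsilon>r * t < 0 then \<rho>l else \<rho>r))"
  define Ir where "Ir = (\<lambda>t. LINT x|lborel. rf t x * \<psi> (x, t))"
  define Ih where "Ih = (\<lambda>t. LINT x|lborel. H t x * \<psi> (x, t))"
  define Tt where "Tt = (\<lambda>t. W * t * \<psi> (\<upsilon>r * t, t))"
  define C where "C = \<bar>\<rho>l\<bar> + \<bar>rs\<bar> + \<bar>\<rho>r\<bar>"
  have rfb: "\<bar>rf t x\<bar> \<le> C" for t x unfolding rf_def C_def by auto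
  have Hb: "\<bar>H t x\<bar> \<le> C" for t x unfolding H_def C_def by auto
  have [measurable]: "Ir \<in> borel_measurable lborel" unfolding Ir_def rf_def by measurable
  have [measurable]: "Ih \<in> borel_measurable lborel" unfolding Ih_def H_def by measurable
  have [measurable]: "Tt \<in> borel_measurable lborel" unfolding Tt_def by measurable
  have intr: "integrable lborel (\<lambda>x. rf t x * \<psi> (x, t)) \<and> \<bar>Ir t\<bar> \<le> C * M * (2 * R)" for t
    unfolding Ir_def by (rule inner_int[OF cont Mb supp _ rfb]) (use R0 in \<open>auto simp: rf_def\<close>)
  have inth: "integrable lborel (\<lambda>x. H t x * \<psi> (x, t)) \<and> \<bar>Ih t\<bar> \<le> C * M * (2 * R)" for t
    unfolding Ih_def by (rule inner_int[OF cont Mb supp _ Hb]) (use R0 in \<open>auto simp: H_def\<close>)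
  have C0: "C \<ge> 0" unfolding C_def by simp
  have zr: "Ir t = 0" "Ih t = 0" "Tt t = 0" if "t > R" for t
  proof -
    have "\<psi> (x, t) = 0" for x using supp[of x t] that abs_ge_self[of t] by linarith
    thus "Ir t = 0" "Ih t = 0" "Tt t = 0" unfolding Ir_def Ih_def Tt_def by auto
  qed
  have sir: "set_integrable lborel {0<..} Ir"
    using outer_int[of Ir "C * M * (2 * R)" R] intr zr C0 M0 R0 by auto
  have sih: "set_integrable lborel {0<..} Ih"
    using outer_int[of Ih "C * M * (2 * R)" R] inth zr C0 M0 R0 by auto
  have Tb: "\<bar>Tt t\<bar> \<le> W * R * M" if "t > 0" for t
  proof (cases "\<psi> (\<upsilon>r * t, t) = 0")
    case False
    hence "t \<le> R" using supp by force
    thus ?thesis unfolding Tt_def using that srs Mb[of "(\<upsilon>r * t, t)"]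
      by (simp add: abs_mult mult_mono mult_left_mono)
  qed (use srs R0 M0 in \<open>auto simp: Tt_def\<close>)
  have siT: "set_integrable lborel {0<..} Tt"
    using outer_int[of Tt "W * R * M" R] Tb zr srs M0 R0 by auto
  define \<Phi> where "\<Phi> = (\<lambda>t. Ir t - Tt t - Ih t)"
  have [measurable]: "\<Phi> \<in> borel_measurable lborel" unfolding \<Phi>_def by measurable
  have Pb: "\<bar>\<Phi> t\<bar> \<le> W * \<epsilon> * R" if t0: "t > 0" for t
  proof (cases "t \<le> R")
    case False thus ?thesis using zr[of t] srs eps R0 unfolding \<Phi>_def by simp
  next
    case tR: True
    define ind where "ind = (\<lambda>x. indicator {s * t..<\<upsilon>r * t} x :: real)"
    have stu: "s * t \<le> \<upsilon>r * t" using srs t0 by simp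
    have indi: "integrable lborel ind" unfolding ind_def using stu by auto
    have "rf t x * \<psi> (x, t) - H t x * \<psi> (x, t) = (rs - \<rho>l) * (ind x * \<psi> (x, t))" for x
    proof -
      have "x / t < s \<longleftrightarrow> x < s * t" "x / t < \<upsilon>r \<longleftrightarrow> x < \<upsilon>r * t"
        using t0 by (auto simp: field_simps)
      thus ?thesis unfolding rf_def H_def ind_def using stu srs
        by (auto simp: indicator_def algebra_simps)
    qed
    note eq = this
    have "Ir t - Ih t = (LINT x|lborel. rf t x * \<psi> (x, t) - H t x * \<psi> (x, t))"
      unfolding Ir_def Ih_def by (rule Bochner_Integration.integral_diff[symmetric]) (use intr[of t] inth[of t] in auto)
    also have "\<dots> = LINT x|lborel. (rs - \<rho>l) * (ind x * \<psi> (x, t))"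
      by (simp only: eq)
    also have "\<dots> = (rs - \<rho>l) * (LINT x|lborel. ind x * \<psi> (x, t))" by simp
    finally have 1: "Ir t - Ih t = (rs - \<rho>l) * (LINT x|lborel. ind x * \<psi> (x, t))" .
    have "(LINT x|lborel. ind x * \<psi> (\<upsilon>r * t, t)) = (\<upsilon>r - s) * t * \<psi> (\<upsilon>r * t, t)"
      unfolding ind_def using stu by (simp add: algebra_simps)
    moreover have "Tt t = (rs - \<rho>l) * ((\<upsilon>r - s) * t * \<psi> (\<upsilon>r * t, t))"
      unfolding Tt_def srs(2)[symmetric] by (simp add: mult.assoc)
    ultimately have 2: "Tt t = (rs - \<rho>l) * (LINT x|lborel. ind x * \<psi> (\<upsilon>r * t, t))"
      by (simp only:)
    have ii1: "integrable lborel (\<lambda>x. ind x * \<psi> (x, t))"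
      using inner_int[OF cont Mb supp _ _ R0[THEN less_imp_le], of ind 1 t] unfolding ind_def by auto
    have ii2: "integrable lborel (\<lambda>x. ind x * \<psi> (\<upsilon>r * t, t))" using indi by simp
    have "(LINT x|lborel. ind x * \<psi> (x, t)) - (LINT x|lborel. ind x * \<psi> (\<upsilon>r * t, t))
        = (LINT x|lborel. ind x * \<psi> (x, t) - ind x * \<psi> (\<upsilon>r * t, t))"
      by (rule Bochner_Integration.integral_diff[symmetric]) (use ii1 ii2 in auto)
    also have "\<dots> = (LINT x|lborel. ind x * (\<psi> (x, t) - \<psi> (\<upsilon>r * t, t)))"
      by (simp only: right_diff_distrib)
    finally have d: "(LINT x|lborel. ind x * \<psi> (x, t)) - (LINT x|lborel. ind x * \<psi> (\<upsilon>r * t, t))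
        = (LINT x|lborel. ind x * (\<psi> (x, t) - \<psi> (\<upsilon>r * t, t)))" .
    have 3: "\<Phi> t = (rs - \<rho>l) * (LINT x|lborel. ind x * (\<psi> (x, t) - \<psi> (\<upsilon>r * t, t)))"
    proof -
      have "\<Phi> t = (Ir t - Ih t) - Tt t" unfolding \<Phi>_def by simp
      also have "\<dots> = (rs - \<rho>l) * (LINT x|lborel. ind x * \<psi> (x, t))
          - (rs - \<rho>l) * (LINT x|lborel. ind x * \<psi> (\<upsilon>r * t, t))" by (simp only: 1 2)
      also have "\<dots> = (rs - \<rho>l) * ((LINT x|lborel. ind x * \<psi> (x, t))
          - (LINT x|lborel. ind x * \<psi> (\<upsilon>r * t, t)))" by (simp only: right_diff_distrib)
      finally show ?thesis by (simp only: d)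
    qed
    have pb: "\<bar>ind x * (\<psi> (x, t) - \<psi> (\<upsilon>r * t, t))\<bar> \<le> \<epsilon> * ind x" for x
    proof (cases "x \<in> {s * t..<\<upsilon>r * t}")
      case True
      hence x1: "s * t \<le> x" "x < \<upsilon>r * t" by auto
      have x2: "(\<upsilon>r - s) * t \<le> (\<upsilon>r - s) * R" using tR srs by (intro mult_left_mono) auto
      have x3: "\<upsilon>r * t - x \<le> (\<upsilon>r - s) * t" using x1 by (simp add: left_diff_distrib)
      have "\<bar>x - \<upsilon>r * t\<bar> \<le> (\<upsilon>r - s) * R" using x1 x2 x3 by linarith
      hence u: "\<bar>\<psi> (x, t) - \<psi> (\<upsilon>r * t, t)\<bar> \<le> \<epsilon>" by (rule UC[OF t0 tR])
      have "ind x = 1" unfolding ind_def using True by simp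
      thus ?thesis using u by simp
    qed (auto simp: ind_def)
    have "\<bar>LINT x|lborel. ind x * (\<psi> (x, t) - \<psi> (\<upsilon>r * t, t))\<bar>
        \<le> (LINT x|lborel. norm (ind x * (\<psi> (x, t) - \<psi> (\<upsilon>r * t, t))))"
      using integral_norm_bound[of lborel "\<lambda>x. ind x * (\<psi> (x, t) - \<psi> (\<upsilon>r * t, t))"] by simp
    also have "\<dots> \<le> (LINT x|lborel. \<epsilon> * ind x)"
      by (rule integral_mono) (use pb ii1 ii2 indi in \<open>auto simp: right_diff_distrib\<close>)
    also have "\<dots> = \<epsilon> * ((\<upsilon>r - s) * t)" unfolding ind_def using stu by (simp add: algebra_simps)
    finally have "\<bar>\<Phi> t\<bar> \<le> (rs - \<rho>l) * (\<epsilon> * ((\<upsilon>r - s) * t))"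
      unfolding 3 using srs by (simp add: abs_mult mult_left_mono)
    also have "\<dots> = W * \<epsilon> * t" using srs(2) by (simp add: algebra_simps flip: srs(2))
    also have "\<dots> \<le> W * \<epsilon> * R" using tR srs eps by (simp add: mult_left_mono)
    finally show ?thesis .
  qed
  have "\<bar>LINT t:{0<..}|lborel. \<Phi> t\<bar> \<le> W * \<epsilon> * R * R"
    using outer_int[of \<Phi> "W * \<epsilon> * R" R] Pb zr srs eps R0 unfolding \<Phi>_def by auto
  moreover have "(LINT t:{0<..}|lborel. \<Phi> t) = (LINT t:{0<..}|lborel. Ir t) - ((LINT t:{0<..}|lborel. Tt t) + (LINT t:{0<..}|lborel. Ih t))"
    unfolding \<Phi>_def using sir sih siT by simp
  ultimately show ?thesis unfolding Ir_def Ih_def Tt_def rf_def H_def by simp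
qed


lemma sig_facts:
  assumes "B > 0" "1 \<le> \<Gamma>" "\<kappa> > 0" "\<rho>l > 0" "\<upsilon>r \<le> \<upsilon>l - B / \<rho>l powr \<kappa>"
    and z: "0 < a" "0 < A" "a * max \<rho>l \<rho>r < 1"
  defines "rs \<equiv> rho_star a A B \<Gamma> \<kappa> \<rho>l \<upsilon>l \<upsilon>r"
    and "s \<equiv> sigma1 a A B \<Gamma> \<kappa> \<rho>l \<upsilon>l \<upsilon>r"
  shows "\<rho>l < rs \<and> (rs - \<rho>l) * (\<upsilon>r - s) = \<rho>l * (\<upsilon>l - \<upsilon>r)
    \<and> \<upsilon>r - s = \<rho>l * (\<upsilon>l - \<upsilon>r) / (rs - \<rho>l) \<and> s < \<upsilon>r"
proof -
  have "a * \<rho>l \<le> a * max \<rho>l \<rho>r" using z by (intro mult_left_mono) auto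
  hence al: "a * \<rho>l < 1" using z by linarith
  have rs: "\<rho>l < rs" "pres a A B \<Gamma> \<kappa> rs - pres a A B \<Gamma> \<kappa> \<rho>l = \<upsilon>l - \<upsilon>r"
    using rho_star_props[of a A B \<Gamma> \<kappa> \<rho>l \<upsilon>r \<upsilon>l] assms al unfolding rs_def by auto
  have D: "\<upsilon>l - \<upsilon>r > 0" using assms by (smt (verit) divide_pos_pos powr_gt_zero)
  have s: "s = \<upsilon>l - rs * (\<upsilon>l - \<upsilon>r) / (rs - \<rho>l)"
    unfolding s_def sigma1_def Let_def rs_def[symmetric] using rs(2) by simp
  have e: "\<upsilon>r - s = \<rho>l * (\<upsilon>l - \<upsilon>r) / (rs - \<rho>l)"
    unfolding s using rs(1) by (simp add: field_simps)
  have "\<rho>l * (\<upsilon>l - \<upsilon>r) / (rs - \<rho>l) > 0" using rs(1) D assms by simp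
  thus ?thesis using e rs(1) by simp
qed

theorem theorem3p1:
  fixes B \<Gamma> \<kappa> \<rho>l \<rho>r \<upsilon>l \<upsilon>r :: real
  assumes "B > 0" and "1 \<le> \<Gamma>" and "\<Gamma> \<le> 3" and "0 < \<kappa>" and "\<kappa> \<le> 1"
    and "\<rho>l > 0" and "\<rho>r > 0" and "\<upsilon>l \<ge> 0" and "\<upsilon>r \<ge> 0"
    and "\<upsilon>r \<le> \<upsilon>l - B / \<rho>l powr \<kappa>"
  shows
    "(\<forall>x t. t > 0 \<longrightarrow>
       ((\<lambda>(a, A). v_sol a A B \<Gamma> \<kappa> \<rho>l \<upsilon>l \<upsilon>r (x / t))
          \<longlongrightarrow> (if x < \<upsilon>r * t then \<upsilon>l else \<upsilon>r))
       (at (0, 0) within {(a, A). 0 < a \<and> 0 < A \<and> a * max \<rho>l \<rho>r < 1}))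
   \<and> (\<forall>\<psi>. test_fun \<psi> \<longrightarrow>
       ((\<lambda>(a, A). LINT t:{0<..}|lborel. LINT x|lborel.
            rho_sol a A B \<Gamma> \<kappa> \<rho>l \<upsilon>l \<rho>r \<upsilon>r (x / t) * \<psi> (x, t))
          \<longlongrightarrow> (LINT t:{0<..}|lborel. \<rho>l * (\<upsilon>l - \<upsilon>r) * t * \<psi> (\<upsilon>r * t, t))
              + (LINT t:{0<..}|lborel. LINT x|lborel.
                   (if x - \<upsilon>r * t < 0 then \<rho>l else \<rho>r) * \<psi> (x, t)))
       (at (0, 0) within {(a, A). 0 < a \<and> 0 < A \<and> a * max \<rho>l \<rho>r < 1}))"
proof (intro conjI allI impI)
  let ?S = "{(a, A). 0 < a \<and> 0 < A \<and> a * max \<rho>l \<rho>r < 1} :: (real \<times> real) set"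
  let ?F = "at (0::real, 0::real) within ?S"
  define W where "W = \<rho>l * (\<upsilon>l - \<upsilon>r)"
  have D: "\<upsilon>l - \<upsilon>r > 0" using assms by (smt (verit) divide_pos_pos powr_gt_zero)
  have W0: "W > 0" unfolding W_def using D assms by simp
  note sf = sig_facts[OF assms(1,2,4,6,10)]
  note eb = ev_big[OF assms(1,2,4,6,10)]
  {
    fix x t :: real assume t0: "t > 0"
    show "((\<lambda>(a, A). v_sol a A B \<Gamma> \<kappa> \<rho>l \<upsilon>l \<upsilon>r (x / t))
          \<longlongrightarrow> (if x < \<upsilon>r * t then \<upsilon>l else \<upsilon>r)) ?F"
    proof (cases "x < \<upsilon>r * t")
      case True
      hence g: "\<upsilon>r - x / t > 0" using t0 by (simp add: field_simps)
      have "eventually (\<lambda>z. (case z of (a, A) \<Rightarrow> v_sol a A B \<Gamma> \<kappa> \<rho>l \<upsilon>l \<upsilon>r (x / t)) = \<upsilon>l) ?F"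
        using eb[of \<rho>r "\<rho>l + W / (\<upsilon>r - x / t)"]
      proof (rule eventually_mono)
        fix z assume z: "z \<in> ?S \<and> \<rho>l + W / (\<upsilon>r - x / t) < rho_star (fst z) (snd z) B \<Gamma> \<kappa> \<rho>l \<upsilon>l \<upsilon>r"
        obtain a A where zz: "z = (a, A)" by force
        define rs where "rs = rho_star a A B \<Gamma> \<kappa> \<rho>l \<upsilon>l \<upsilon>r"
        define s where "s = sigma1 a A B \<Gamma> \<kappa> \<rho>l \<upsilon>l \<upsilon>r"
        have f: "\<rho>l < rs" "\<upsilon>r - s = W / (rs - \<rho>l)"
          using sf[of a A \<rho>r] z zz unfolding rs_def s_def W_def by auto
        have "W / (\<upsilon>r - x / t) < rs - \<rho>l" using z zz unfolding rs_def by simp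
        hence "W < (rs - \<rho>l) * (\<upsilon>r - x / t)" using g by (simp add: pos_divide_less_eq mult.commute)
        hence "W / (rs - \<rho>l) < \<upsilon>r - x / t" using f(1) by (simp add: pos_divide_less_eq mult.commute)
        hence "x / t < s" using f by linarith
        thus "(case z of (a, A) \<Rightarrow> v_sol a A B \<Gamma> \<kappa> \<rho>l \<upsilon>l \<upsilon>r (x / t)) = \<upsilon>l"
          unfolding zz v_sol_def s_def by simp
      qed
      thus ?thesis using True by (simp add: tendsto_eventually)
    next
      case False
      hence g: "x / t \<ge> \<upsilon>r" using t0 by (simp add: field_simps)
      have "eventually (\<lambda>z. (case z of (a, A) \<Rightarrow> v_sol a A B \<Gamma> \<kappa> \<rho>l \<upsilon>l \<upsilon>r (x / t)) = \<upsilon>r) ?F"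
        using eb[of \<rho>r 0]
      proof (rule eventually_mono)
        fix z assume z: "z \<in> ?S \<and> 0 < rho_star (fst z) (snd z) B \<Gamma> \<kappa> \<rho>l \<upsilon>l \<upsilon>r"
        obtain a A where zz: "z = (a, A)" by force
        have "sigma1 a A B \<Gamma> \<kappa> \<rho>l \<upsilon>l \<upsilon>r < \<upsilon>r" using sf[of a A \<rho>r] z zz by auto
        thus "(case z of (a, A) \<Rightarrow> v_sol a A B \<Gamma> \<kappa> \<rho>l \<upsilon>l \<upsilon>r (x / t)) = \<upsilon>r"
          unfolding zz v_sol_def using g by auto
      qed
      thus ?thesis using False by (simp add: tendsto_eventually)
    qed
  }
  {
    fix \<psi> :: "real \<times> real \<Rightarrow> real" assume tf: "test_fun \<psi>"
    have cont: "continuous_on UNIV \<psi>" using tf unfolding test_fun_def smooth2_def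
      by (metis Ck2.simps(1))
    define Sp where "Sp = closure {z. \<psi> z \<noteq> 0}"
    have cS: "compact Sp" using tf unfolding test_fun_def Sp_def by simp
    obtain R where R: "R > 0" "\<And>z. z \<in> Sp \<Longrightarrow> norm z \<le> R"
      using compact_imp_bounded[OF cS] unfolding bounded_pos by auto
    have supp: "\<bar>x\<bar> \<le> R \<and> \<bar>t\<bar> \<le> R" if "\<psi> (x, t) \<noteq> 0" for x t
    proof -
      have "(x, t) \<in> {z. \<psi> z \<noteq> 0}" using that by simp
      hence "(x, t) \<in> Sp" unfolding Sp_def by (rule subsetD[OF closure_subset])
      hence n: "norm (x, t) \<le> R" by (rule R(2))
      have "\<bar>x\<bar> \<le> norm (x, t)" using norm_fst_le[of x t] by simp
      moreover have "\<bar>t\<bar> \<le> norm (x, t)" using norm_snd_le[of t x] by simp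
      ultimately show ?thesis using n by linarith
    qed
    have "compact (\<psi> ` Sp)" by (rule compact_continuous_image[OF continuous_on_subset[OF cont] cS]) auto
    then have "bounded (\<psi> ` Sp)" by (rule compact_imp_bounded)
    then obtain M where M: "M > 0" "\<And>y. y \<in> \<psi> ` Sp \<Longrightarrow> norm y \<le> M"
      unfolding bounded_pos by auto
    have Mb: "\<bar>\<psi> z\<bar> \<le> M" for z
    proof (cases "\<psi> z = 0")
      case False
      hence "z \<in> {z. \<psi> z \<noteq> 0}" by simp
      hence "z \<in> Sp" unfolding Sp_def by (rule subsetD[OF closure_subset])
      thus ?thesis using M(2)[of "\<psi> z"] by auto
    qed (use M in auto)
    define L where "L = \<upsilon>r * R + R + 1"
    define K where "K = cbox (- L, - L) (L, L)"
    have "uniformly_continuous_on K \<psi>"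
      unfolding K_def by (rule compact_uniformly_continuous[OF continuous_on_subset[OF cont] compact_cbox]) auto
    hence uc: "\<forall>e>0. \<exists>d>0. \<forall>p\<in>K. \<forall>q\<in>K. dist q p < d \<longrightarrow> dist (\<psi> q) (\<psi> p) < e"
      unfolding uniformly_continuous_on_def by blast
    have memK: "(x, t) \<in> K" if "\<bar>x\<bar> \<le> L" "\<bar>t\<bar> \<le> L" for x t
      unfolding K_def cbox_Pair_eq using that by (auto simp: cbox_interval)
    show "((\<lambda>(a, A). LINT t:{0<..}|lborel. LINT x|lborel.
            rho_sol a A B \<Gamma> \<kappa> \<rho>l \<upsilon>l \<rho>r \<upsilon>r (x / t) * \<psi> (x, t))
          \<longlongrightarrow> (LINT t:{0<..}|lborel. \<rho>l * (\<upsilon>l - \<upsilon>r) * t * \<psi> (\<upsilon>r * t, t))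
              + (LINT t:{0<..}|lborel. LINT x|lborel.
                   (if x - \<upsilon>r * t < 0 then \<rho>l else \<rho>r) * \<psi> (x, t))) ?F"
      unfolding tendsto_iff
    proof (intro allI impI)
      fix e :: real assume e0: "e > 0"
      define \<epsilon> where "\<epsilon> = e / (2 * (W * R * R + 1))"
      have WRR: "W * R * R \<ge> 0" using W0 R by simp
      have eps0: "\<epsilon> > 0" unfolding \<epsilon>_def using e0 WRR by simp
      have epsl: "W * \<epsilon> * R * R < e"
      proof -
        have "W * \<epsilon> * R * R = (W * R * R) * e / (2 * (W * R * R + 1))"
          unfolding \<epsilon>_def by (simp add: field_simps)
        also have "\<dots> < e"
        proof -
          have "0 \<le> (W * R * R) * e" using WRR e0 by simp
          hence "(W * R * R) * e < e * (2 * (W * R * R + 1))" using e0 by (simp add: algebra_simps)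
          thus ?thesis using WRR by (simp add: pos_divide_less_eq)
        qed
        finally show ?thesis .
      qed
      obtain d where d: "d > 0" "\<And>p q. p \<in> K \<Longrightarrow> q \<in> K \<Longrightarrow> dist q p < d \<Longrightarrow> dist (\<psi> q) (\<psi> p) < \<epsilon>"
        using uc eps0 by metis
      define d' where "d' = min d 1"
      have d': "d' > 0" "d' \<le> d" "d' \<le> 1" unfolding d'_def using d by auto
      show "eventually (\<lambda>z. dist (case z of (a, A) \<Rightarrow> LINT t:{0<..}|lborel. LINT x|lborel.
            rho_sol a A B \<Gamma> \<kappa> \<rho>l \<upsilon>l \<rho>r \<upsilon>r (x / t) * \<psi> (x, t))
          ((LINT t:{0<..}|lborel. \<rho>l * (\<upsilon>l - \<upsilon>r) * t * \<psi> (\<upsilon>r * t, t))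
              + (LINT t:{0<..}|lborel. LINT x|lborel.
                   (if x - \<upsilon>r * t < 0 then \<rho>l else \<rho>r) * \<psi> (x, t)))  < e) ?F"
        using eb[of \<rho>r "\<rho>l + W * R / d'"]
      proof (rule eventually_mono)
        fix z assume z: "z \<in> ?S \<and> \<rho>l + W * R / d' < rho_star (fst z) (snd z) B \<Gamma> \<kappa> \<rho>l \<upsilon>l \<upsilon>r"
        obtain a A where zz: "z = (a, A)" by force
        define rs where "rs = rho_star a A B \<Gamma> \<kappa> \<rho>l \<upsilon>l \<upsilon>r"
        define s where "s = sigma1 a A B \<Gamma> \<kappa> \<rho>l \<upsilon>l \<upsilon>r"
        have f: "\<rho>l < rs" "(rs - \<rho>l) * (\<upsilon>r - s) = W" "\<upsilon>r - s = W / (rs - \<rho>l)" "s < \<upsilon>r"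
          using sf[of a A \<rho>r] z zz unfolding rs_def s_def W_def by auto
        have "W * R / d' < rs - \<rho>l" using z zz unfolding rs_def by simp
        hence "W * R < (rs - \<rho>l) * d'" using d' by (simp add: field_simps)
        hence sR: "(\<upsilon>r - s) * R < d'" unfolding f(3) using f(1) by (simp add: field_simps)
        have UC: "\<bar>\<psi> (x, t) - \<psi> (\<upsilon>r * t, t)\<bar> \<le> \<epsilon>"
          if "0 < t" "t \<le> R" "\<bar>x - \<upsilon>r * t\<bar> \<le> (\<upsilon>r - s) * R" for x t
        proof -
          have h1: "\<bar>x - \<upsilon>r * t\<bar> < d'" using that sR by linarith
          have h2: "\<upsilon>r * t \<le> \<upsilon>r * R" using that assms by (intro mult_left_mono) auto
          have h3: "0 \<le> \<upsilon>r * t" using that assms by simp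
          have h4: "0 \<le> \<upsilon>r * R" using assms(9) R(1) by simp
          have i1: "(x, t) \<in> K" 
            by (rule memK) (use h1 h2 h3 h4 d' that R(1) in \<open>simp_all add: L_def abs_le_iff abs_less_iff\<close>)
          have i2: "(\<upsilon>r * t, t) \<in> K"
            by (rule memK) (use h2 h3 h4 that R(1) in \<open>simp_all add: L_def abs_le_iff\<close>)
          have "dist (x, t) (\<upsilon>r * t, t) < d"
            using h1 d' by (simp add: dist_Pair_Pair dist_real_def)
          hence "dist (\<psi> (x, t)) (\<psi> (\<upsilon>r * t, t)) < \<epsilon>" using d(2)[OF i2 i1] by simp
          thus ?thesis by (simp add: dist_real_def)
        qed
        have rseq: "rho_sol a A B \<Gamma> \<kappa> \<rho>l \<upsilon>l \<rho>r \<upsilon>r = (\<lambda>\<zeta>. if \<zeta> < s then \<rho>l else if \<zeta> < \<upsilon>r then rs else \<rho>r)"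
          by (rule ext) (simp add: rho_sol_def s_def rs_def)
        have ce: "\<bar>(LINT t:{0<..}|lborel. LINT x|lborel.
            (if x / t < s then \<rho>l else if x / t < \<upsilon>r then rs else \<rho>r) * \<psi> (x, t))
         - ((LINT t:{0<..}|lborel. W * t * \<psi> (\<upsilon>r * t, t))
              + (LINT t:{0<..}|lborel. LINT x|lborel.
                   (if x - \<upsilon>r * t < 0 then \<rho>l else \<rho>r) * \<psi> (x, t)))\<bar> \<le> W * \<epsilon> * R * R"
          by (rule core_est[OF cont Mb supp R(1) f(4) f(2) _ _ _ UC])
             (use W0 f(1) eps0 in auto)
        show "dist (case z of (a, A) \<Rightarrow> LINT t:{0<..}|lborel. LINT x|lborel.
            rho_sol a A B \<Gamma> \<kappa> \<rho>l \<upsilon>l \<rho>r \<upsilon>r (x / t) * \<psi> (x, t))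
          ((LINT t:{0<..}|lborel. \<rho>l * (\<upsilon>l - \<upsilon>r) * t * \<psi> (\<upsilon>r * t, t))
              + (LINT t:{0<..}|lborel. LINT x|lborel.
                   (if x - \<upsilon>r * t < 0 then \<rho>l else \<rho>r) * \<psi> (x, t))) < e"
          using ce epsl unfolding zz prod.case rseq W_def dist_real_def by linarith
      qed
    qed
  }
qed
end
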